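(* Let $k$ be a field, $A=kQ_A/I_A$ an indecomposable finite-dimensional monomial algebra with vertices $e_1,\dots,e_n$, and $B$ the algebra obtained from $A$ by gluing the distinct non-isolated vertices $e_1$ and $e_n$. Then there is an algebra monomorphism $Z(A)\hookrightarrow Z(B)$, and $\dim_kZ(B)=\dim_kZ(A)+\mathrm{nsp}(1,n)$.
   Context: Monomial: $A=kQ_A/I_A$, $Q_A$ a finite quiver, $I_A$ admissible, generated by a minimal set $Z_A$ of paths of length $\ge2$; $\mathcal B_A$ is the set of paths (including trivial ones) not containing an element of $Z_A$ as a subpath, a basis of $A$. Gluing: $B$ is the subalgebra of $A$ generated by $f_1=e_1+e_n$, $f_i=e_i$ ($2\le i\le n-1$) and all arrows ($B\cong kQ_B/I_B$, $Q_B$ obtained by identifying $e_1,e_n$, $I_B$ generated by $I_A$ and all newly formed length-2 paths through the new vertex). $Z(\cdot)$ denotes the center. A non-special path is a path $p\in\mathcal B_A$ either from $e_1$ to $e_n$ or from $e_n$ to $e_1$ such that $ap\in I_A$ and $pb\in I_A$ for all arrows $a,b$ of $Q_A$; $\mathrm{nsp}(1,n)$ is the number of non-special paths. *)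

theory Defs
  imports Complex_Main "HOL-Library.Function_Algebras"
begin

text \<open>A path is a pair (start vertex, list of arrows); the trivial path e_i is (i, []).
Concatenation p q = "first p, then q".\<close>

type_synonym 'a qpath = "nat \<times> 'a list"

definition is_path :: "nat \<Rightarrow> 'a set \<Rightarrow> ('a \<Rightarrow> nat) \<Rightarrow> ('a \<Rightarrow> nat) \<Rightarrow> 'a qpath \<Rightarrow> bool" where
  "is_path n Arr s t p \<longleftrightarrow> fst p \<in> {1..n} \<and> set (snd p) \<subseteq> Arr \<and>
     (snd p \<noteq> [] \<longrightarrow> s (hd (snd p)) = fst p) \<and>
     (\<forall>i. Suc i < length (snd p) \<longrightarrow> t (snd p ! i) = s (snd p ! Suc i))"

definition pend :: "('a \<Rightarrow> nat) \<Rightarrow> 'a qpath \<Rightarrow> nat" where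
  "pend t p = (if snd p = [] then fst p else t (last (snd p)))"

definition pcat :: "'a qpath \<Rightarrow> 'a qpath \<Rightarrow> 'a qpath" where
  "pcat p q = (fst p, snd p @ snd q)"

text \<open>p contains an element of Z as a subpath (i.e. p lies in the monomial ideal I_A).\<close>
definition contains_rel :: "'a list set \<Rightarrow> 'a qpath \<Rightarrow> bool" where
  "contains_rel Z p \<longleftrightarrow> (\<exists>z\<in>Z. \<exists>u v. snd p = u @ z @ v)"

definition basis_paths :: "nat \<Rightarrow> 'a set \<Rightarrow> ('a \<Rightarrow> nat) \<Rightarrow> ('a \<Rightarrow> nat) \<Rightarrow> 'a list set \<Rightarrow> 'a qpath set" where
  "basis_paths n Arr s t Z = {p. is_path n Arr s t p \<and> \<not> contains_rel Z p}"

definition monomial_relations :: "nat \<Rightarrow> 'a set \<Rightarrow> ('a \<Rightarrow> nat) \<Rightarrow> ('a \<Rightarrow> nat) \<Rightarrow> 'a list set \<Rightarrow> bool" where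
  "monomial_relations n Arr s t Z \<longleftrightarrow> finite Z \<and>
     (\<forall>z\<in>Z. 2 \<le> length z \<and> is_path n Arr s t (s (hd z), z)) \<and>
     (\<forall>z\<in>Z. \<forall>z'\<in>Z. (\<exists>u v. z = u @ z' @ v) \<longrightarrow> z' = z)"

text \<open>The algebra A: elements are k-linear combinations of basis paths, i.e. functions
vanishing outside B_A; multiplication extends concatenation (product is 0 if the paths
are not composable or the concatenation contains a relation).\<close>
definition alg_carrier :: "'a qpath set \<Rightarrow> ('a qpath \<Rightarrow> 'k::field) set" where
  "alg_carrier BA = {x. \<forall>p. p \<notin> BA \<longrightarrow> x p = 0}"

definition alg_mult :: "('a \<Rightarrow> nat) \<Rightarrow> 'a qpath set \<Rightarrow> ('a qpath \<Rightarrow> 'k::field) \<Rightarrow> ('a qpath \<Rightarrow> 'k) \<Rightarrow> ('a qpath \<Rightarrow> 'k)" where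
  "alg_mult t BA x y = (\<lambda>r. if r \<in> BA then
      (\<Sum>(p,q)\<in>{(p,q). p \<in> BA \<and> q \<in> BA \<and> pend t p = fst q \<and> pcat p q = r}. x p * y q)
    else 0)"

definition alg_smult :: "'k::field \<Rightarrow> ('a qpath \<Rightarrow> 'k) \<Rightarrow> ('a qpath \<Rightarrow> 'k)" where
  "alg_smult c x = (\<lambda>r. c * x r)"

definition basis_elt :: "'a qpath \<Rightarrow> ('a qpath \<Rightarrow> 'k::field)" where
  "basis_elt p = (\<lambda>r. if r = p then 1 else 0)"

definition alg_one :: "nat \<Rightarrow> ('a qpath \<Rightarrow> 'k::field)" where
  "alg_one n = (\<lambda>r. if snd r = [] \<and> fst r \<in> {1..n} then 1 else 0)"

definition alg_center :: "('a qpath \<Rightarrow> 'k) set \<Rightarrow> (('a qpath \<Rightarrow> 'k) \<Rightarrow> ('a qpath \<Rightarrow> 'k) \<Rightarrow> ('a qpath \<Rightarrow> 'k))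
     \<Rightarrow> ('a qpath \<Rightarrow> 'k) set" where
  "alg_center C m = {x \<in> C. \<forall>y\<in>C. m x y = m y x}"

definition alg_indecomposable :: "('a qpath \<Rightarrow> 'k::field) set \<Rightarrow> (('a qpath \<Rightarrow> 'k) \<Rightarrow> ('a qpath \<Rightarrow> 'k) \<Rightarrow> ('a qpath \<Rightarrow> 'k))
     \<Rightarrow> ('a qpath \<Rightarrow> 'k) \<Rightarrow> bool" where
  "alg_indecomposable C m one \<longleftrightarrow> one \<noteq> 0 \<and>
     (\<forall>x\<in>alg_center C m. m x x = x \<longrightarrow> x = 0 \<or> x = one)"

inductive_set gen_subalg :: "(('a qpath \<Rightarrow> 'k::field) \<Rightarrow> ('a qpath \<Rightarrow> 'k) \<Rightarrow> ('a qpath \<Rightarrow> 'k))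
    \<Rightarrow> ('a qpath \<Rightarrow> 'k) set \<Rightarrow> ('a qpath \<Rightarrow> 'k) set" for m G where
  gen: "g \<in> G \<Longrightarrow> g \<in> gen_subalg m G"
| zero: "0 \<in> gen_subalg m G"
| add: "x \<in> gen_subalg m G \<Longrightarrow> y \<in> gen_subalg m G \<Longrightarrow> x + y \<in> gen_subalg m G"
| smult: "x \<in> gen_subalg m G \<Longrightarrow> alg_smult c x \<in> gen_subalg m G"
| mult: "x \<in> gen_subalg m G \<Longrightarrow> y \<in> gen_subalg m G \<Longrightarrow> m x y \<in> gen_subalg m G"

definition glue_generators :: "nat \<Rightarrow> 'a set \<Rightarrow> ('a \<Rightarrow> nat) \<Rightarrow> ('a qpath \<Rightarrow> 'k::field) set" where
  "glue_generators n Arr s =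
     {basis_elt (1, []) + basis_elt (n, [])} \<union>
     {basis_elt (i, []) | i. 2 \<le> i \<and> i \<le> n - 1} \<union>
     {basis_elt (s a, [a]) | a. a \<in> Arr}"

definition nonspecial_paths :: "nat \<Rightarrow> 'a set \<Rightarrow> ('a \<Rightarrow> nat) \<Rightarrow> ('a \<Rightarrow> nat) \<Rightarrow> 'a list set \<Rightarrow> 'a qpath set" where
  "nonspecial_paths n Arr s t Z = {p \<in> basis_paths n Arr s t Z.
     ((fst p = 1 \<and> pend t p = n) \<or> (fst p = n \<and> pend t p = 1)) \<and>
     (\<forall>a\<in>Arr. t a = fst p \<longrightarrow> contains_rel Z (pcat (s a, [a]) p)) \<and>
     (\<forall>b\<in>Arr. pend t p = s b \<longrightarrow> contains_rel Z (pcat p (s b, [b])))}"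

definition nsp :: "nat \<Rightarrow> 'a set \<Rightarrow> ('a \<Rightarrow> nat) \<Rightarrow> ('a \<Rightarrow> nat) \<Rightarrow> 'a list set \<Rightarrow> nat" where
  "nsp n Arr s t Z = card (nonspecial_paths n Arr s t Z)"

definition kdim :: "('a qpath \<Rightarrow> 'k::field) set \<Rightarrow> nat" where
  "kdim S = vector_space.dim (alg_smult :: 'k \<Rightarrow> _) S"

end

theory Submission
  imports Defs
begin

fun vp :: "nat \<Rightarrow> 'a set \<Rightarrow> ('a \<Rightarrow> nat) \<Rightarrow> ('a \<Rightarrow> nat) \<Rightarrow> nat \<Rightarrow> 'a list \<Rightarrow> bool" where
  "vp n Arr s t i [] = (i \<in> {1..n})"
| "vp n Arr s t i (a # as) = (i \<in> {1..n} \<and> a \<in> Arr \<and> s a = i \<and> vp n Arr s t (t a) as)"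

lemma vp_start: "vp n Arr s t i xs \<Longrightarrow> i \<in> {1..n}"
  by (cases xs) auto

lemma pend_Nil[simp]: "pend t (i, []) = i"
  by (simp add: pend_def)

lemma pend_Cons: "pend t (i, a # u) = pend t (t a, u)"
  by (cases u) (auto simp: pend_def)

lemma pcat_simp[simp]: "pcat (i, u) (j, v) = (i, u @ v)"
  by (simp add: pcat_def)

lemma vp_append: "vp n Arr s t i (u @ v) \<longleftrightarrow> vp n Arr s t i u \<and> vp n Arr s t (pend t (i, u)) v"
proof (induction u arbitrary: i)
  case Nil
  then show ?case using vp_start by fastforce
next
  case (Cons a u)
  then show ?case by (auto simp: pend_Cons)
qed

lemma vp_pend: "vp n Arr s t i u \<Longrightarrow> pend t (i, u) \<in> {1..n}"
  using vp_append[of n Arr s t i u "[]"] by simp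

lemma is_path_vp:
  assumes "\<forall>a\<in>Arr. t a \<in> {1..n}"
  shows "is_path n Arr s t (i, xs) = vp n Arr s t i xs"
proof (induction xs arbitrary: i)
  case Nil
  then show ?case by (simp add: is_path_def)
next
  case (Cons a xs)
  have e: "(\<forall>k. Suc k < length (a # xs) \<longrightarrow> t ((a # xs) ! k) = s ((a # xs) ! Suc k)) \<longleftrightarrow>
     (xs \<noteq> [] \<longrightarrow> s (hd xs) = t a) \<and> (\<forall>k. Suc k < length xs \<longrightarrow> t (xs ! k) = s (xs ! Suc k))"
    apply (rule iffI)
     apply (rule conjI)
      apply (clarsimp simp: hd_conv_nth)
      apply (drule spec[of _ 0], simp)
     apply clarify
     apply (drule_tac x="Suc k" in spec, simp)
    apply clarify
    subgoal for k by (cases k) (auto simp: hd_conv_nth)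
    done
  show ?case
    using Cons[of "t a"] assms
    unfolding is_path_def by (simp only: e fst_conv snd_conv) auto
qed

lemma contains_rel_sub:
  "\<not> contains_rel Z (i, u @ v @ w) \<Longrightarrow> \<not> contains_rel Z (j, v)"
  unfolding contains_rel_def by (metis append.assoc snd_conv)

locale monalg =
  fixes n :: nat and Arr :: "'a set" and s t :: "'a \<Rightarrow> nat" and Z :: "'a list set"
  assumes n2: "2 \<le> n"
    and arr_rng: "\<forall>a\<in>Arr. s a \<in> {1..n} \<and> t a \<in> {1..n}"
    and rels: "monomial_relations n Arr s t Z"
    and findim: "finite (basis_paths n Arr s t Z)"
begin

abbreviation "BA \<equiv> basis_paths n Arr s t Z"

lemma t_rng: "\<forall>a\<in>Arr. t a \<in> {1..n}" using arr_rng by auto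

lemma BA_iff: "(i, u) \<in> BA \<longleftrightarrow> vp n Arr s t i u \<and> \<not> contains_rel Z (i, u)"
  by (simp add: basis_paths_def is_path_vp[OF t_rng])

lemma BA_iff': "p \<in> BA \<longleftrightarrow> vp n Arr s t (fst p) (snd p) \<and> \<not> contains_rel Z p"
  using BA_iff[of "fst p" "snd p"] by simp

lemma Z_len: "z \<in> Z \<Longrightarrow> 2 \<le> length z"
  using rels by (auto simp: monomial_relations_def)

lemma triv_BA: "i \<in> {1..n} \<Longrightarrow> (i, []) \<in> BA"
  using Z_len by (fastforce simp: BA_iff contains_rel_def)

lemma arrow_BA: "a \<in> Arr \<Longrightarrow> (s a, [a]) \<in> BA"
proof -
  assume a: "a \<in> Arr"
  have "\<not> contains_rel Z (s a, [a])"
  proof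
    assume "contains_rel Z (s a, [a])"
    then obtain z u v where "z \<in> Z" "[a] = u @ z @ v" by (auto simp: contains_rel_def)
    then have "length [a] = length (u @ z @ v)" by (simp only:)
    then have "length z \<le> 1" by simp
    with Z_len[OF \<open>z \<in> Z\<close>] show False by simp
  qed
  with a arr_rng show ?thesis by (simp add: BA_iff)
qed

lemma BA_fst: "p \<in> BA \<Longrightarrow> fst p \<in> {1..n}"
  using vp_start[of n Arr s t "fst p" "snd p"] by (auto simp: BA_iff')

lemma BA_pend: "p \<in> BA \<Longrightarrow> pend t p \<in> {1..n}"
  using vp_pend by (metis BA_iff' prod.collapse)

lemma BA_split: "(i, u @ v) \<in> BA \<Longrightarrow> (i, u) \<in> BA \<and> (pend t (i, u), v) \<in> BA"
  using contains_rel_sub[of Z i "[]" u v] contains_rel_sub[of Z i u v "[]"]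
  by (auto simp: BA_iff vp_append)

lemma BA_arrows: "p \<in> BA \<Longrightarrow> set (snd p) \<subseteq> Arr"
  by (auto simp: basis_paths_def is_path_def)

lemma BA_hd: "p \<in> BA \<Longrightarrow> snd p \<noteq> [] \<Longrightarrow> s (hd (snd p)) = fst p"
  by (auto simp: basis_paths_def is_path_def)

lemma BA_last: "p \<in> BA \<Longrightarrow> snd p \<noteq> [] \<Longrightarrow> t (last (snd p)) = pend t p"
  by (auto simp: pend_def)


lemma finite_S: "finite {(p, q). p \<in> BA \<and> q \<in> BA \<and> pend t p = fst q \<and> pcat p q = w}"
  by (rule finite_subset[of _ "BA \<times> BA"]) (use findim in auto)

lemma mult_out: "w \<notin> BA \<Longrightarrow> alg_mult t BA x y w = 0"
  by (simp add: alg_mult_def)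

lemma mult_single:
  assumes w: "w \<in> BA" and p0: "p0 \<in> BA" and q0: "q0 \<in> BA" and e: "pend t p0 = fst q0" "pcat p0 q0 = w"
    and u: "\<And>p q. p \<in> BA \<Longrightarrow> q \<in> BA \<Longrightarrow> pend t p = fst q \<Longrightarrow> pcat p q = w \<Longrightarrow> x p * y q \<noteq> 0 \<Longrightarrow> p = p0 \<and> q = q0"
  shows "alg_mult t BA x y w = x p0 * y q0"
proof -
  let ?S = "{(p, q). p \<in> BA \<and> q \<in> BA \<and> pend t p = fst q \<and> pcat p q = w}"
  have "alg_mult t BA x y w = (\<Sum>(p,q)\<in>?S. x p * y q)"
    using w by (simp add: alg_mult_def)
  also have "\<dots> = (\<Sum>z\<in>?S. if z = (p0, q0) then x p0 * y q0 else 0)"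
  proof (rule sum.cong[OF refl])
    fix z assume z: "z \<in> ?S"
    obtain p q where zpq: "z = (p, q)" by (cases z) blast
    have pq: "p \<in> BA" "q \<in> BA" "pend t p = fst q" "pcat p q = w" using z zpq by auto
    show "(case z of (p, q) \<Rightarrow> x p * y q) = (if z = (p0, q0) then x p0 * y q0 else 0)"
    proof (cases "x p * y q = 0")
      case True then show ?thesis using zpq by auto
    next
      case False then have "p = p0 \<and> q = q0" using u[OF pq] by blast
      then show ?thesis using zpq by simp
    qed
  qed
  also have "\<dots> = x p0 * y q0"
    using finite_S[of w] p0 q0 e by (simp add: sum.delta')
  finally show ?thesis .
qed

lemma mult_zero:
  assumes u: "\<And>p q. p \<in> BA \<Longrightarrow> q \<in> BA \<Longrightarrow> pend t p = fst q \<Longrightarrow> pcat p q = w \<Longrightarrow> x p * y q = 0"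
  shows "alg_mult t BA x y w = 0"
  unfolding alg_mult_def using u by (auto intro!: sum.neutral)

lemma pcat_eq: "pcat p q = (fst p, snd p @ snd q)"
  by (simp add: pcat_def)

lemma diag_left:
  assumes d: "\<And>r. d r \<noteq> 0 \<Longrightarrow> snd r = []" and w: "w \<in> BA"
  shows "alg_mult t BA d y w = d (fst w, []) * y w"
proof (rule mult_single[OF w])
  show "(fst w, []) \<in> BA" using BA_fst[OF w] triv_BA by blast
  show "w \<in> BA" by fact
  show "pend t (fst w, []) = fst w" by simp
  show "pcat (fst w, []) w = w" by (simp add: pcat_eq)
  fix p q assume "p \<in> BA" "q \<in> BA" "pend t p = fst q" "pcat p q = w" "d p * y q \<noteq> 0"
  then show "p = (fst w, []) \<and> q = w"
    using d[of p] by (cases p; cases q) (auto simp: pcat_eq)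
qed

lemma diag_right:
  assumes d: "\<And>r. d r \<noteq> 0 \<Longrightarrow> snd r = []" and w: "w \<in> BA"
  shows "alg_mult t BA y d w = y w * d (pend t w, [])"
proof (rule mult_single[OF w w])
  show "(pend t w, []) \<in> BA" using BA_pend[OF w] triv_BA by blast
  show "pend t w = fst (pend t w, [])" by simp
  show "pcat w (pend t w, []) = w" by (simp add: pcat_eq)
  fix p q assume "p \<in> BA" "q \<in> BA" "pend t p = fst q" "pcat p q = w" "y p * d q \<noteq> 0"
  then show "p = w \<and> q = (pend t w, [])"
    using d[of q] by (cases p; cases q) (auto simp: pcat_eq)
qed

lemma ns_left:
  assumes uu: "\<And>r. u r \<noteq> 0 \<Longrightarrow> (\<forall>b\<in>Arr. pend t r = s b \<longrightarrow> contains_rel Z (pcat r (s b, [b])))"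
    and w: "w \<in> BA"
  shows "alg_mult t BA u y w = u w * y (pend t w, [])"
proof (rule mult_single[OF w w])
  show "(pend t w, []) \<in> BA" using BA_pend[OF w] triv_BA by blast
  show "pend t w = fst (pend t w, [])" by simp
  show "pcat w (pend t w, []) = w" by (simp add: pcat_eq)
  fix p q assume pq: "p \<in> BA" "q \<in> BA" "pend t p = fst q" "pcat p q = w" "u p * y q \<noteq> 0"
  have "snd q = []"
  proof (rule ccontr)
    assume ne: "snd q \<noteq> []"
    define b where "b = hd (snd q)"
    have b: "b \<in> Arr" using BA_arrows[OF pq(2)] ne unfolding b_def by (meson hd_in_set subsetD)
    have sb: "s b = pend t p" using BA_hd[OF pq(2) ne] pq(3) unfolding b_def by simp
    have "contains_rel Z (pcat p (s b, [b]))" using uu[of p] pq(5) b sb by auto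
    then obtain z u' v' where z: "z \<in> Z" "snd p @ [b] = u' @ z @ v'"
      by (auto simp: contains_rel_def pcat_eq)
    have "snd q = [b] @ tl (snd q)" using ne unfolding b_def by simp
    then have "snd w = u' @ z @ (v' @ tl (snd q))"
      using pq(4) z(2) unfolding pcat_eq by (metis append.assoc snd_conv)
    then have "contains_rel Z w" using z(1) unfolding contains_rel_def by blast
    then show False using w by (simp add: basis_paths_def)
  qed
  then show "p = w \<and> q = (pend t w, [])"
    using pq by (cases p; cases q) (auto simp: pcat_eq)
qed

lemma ns_right:
  assumes uu: "\<And>r. u r \<noteq> 0 \<Longrightarrow> (\<forall>a\<in>Arr. t a = fst r \<longrightarrow> contains_rel Z (pcat (s a, [a]) r))"
    and w: "w \<in> BA"
  shows "alg_mult t BA y u w = y (fst w, []) * u w"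
proof (rule mult_single[OF w])
  show "(fst w, []) \<in> BA" using BA_fst[OF w] triv_BA by blast
  show "w \<in> BA" by fact
  show "pend t (fst w, []) = fst w" by simp
  show "pcat (fst w, []) w = w" by (simp add: pcat_eq)
  fix p q assume pq: "p \<in> BA" "q \<in> BA" "pend t p = fst q" "pcat p q = w" "y p * u q \<noteq> 0"
  have "snd p = []"
  proof (rule ccontr)
    assume ne: "snd p \<noteq> []"
    define a where "a = last (snd p)"
    have a: "a \<in> Arr" using BA_arrows[OF pq(1)] ne unfolding a_def by (meson last_in_set subsetD)
    have ta: "t a = fst q" using BA_last[OF pq(1) ne] pq(3) unfolding a_def by simp
    have "contains_rel Z (pcat (s a, [a]) q)" using uu[of q] pq(5) a ta by auto
    then obtain z u' v' where z: "z \<in> Z" "[a] @ snd q = u' @ z @ v'"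
      by (auto simp: contains_rel_def pcat_eq)
    have "snd p = butlast (snd p) @ [a]" using ne unfolding a_def by simp
    then have "snd w = (butlast (snd p) @ u') @ z @ v'"
      using pq(4) z(2) unfolding pcat_eq by (metis append.assoc snd_conv)
    then have "contains_rel Z w" using z(1) unfolding contains_rel_def by blast
    then show False using w by (simp add: basis_paths_def)
  qed
  then show "p = (fst w, []) \<and> q = w"
    using pq by (cases p; cases q) (auto simp: pcat_eq)
qed

lemma basis_self_left:
  assumes r: "r \<in> BA" shows "alg_mult t BA (basis_elt r) x r = x (pend t r, [])"
proof -
  have "alg_mult t BA (basis_elt r) x r = basis_elt r r * x (pend t r, [])"
  proof (rule mult_single[OF r r])
    show "(pend t r, []) \<in> BA" using BA_pend[OF r] triv_BA by blast
    show "pend t r = fst (pend t r, [])" by simp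
    show "pcat r (pend t r, []) = r" by (simp add: pcat_eq)
    fix p q assume pq: "p \<in> BA" "q \<in> BA" "pend t p = fst q" "pcat p q = r" "basis_elt r p * x q \<noteq> 0"
    then have "p = r" by (auto simp: basis_elt_def split: if_splits)
    then show "p = r \<and> q = (pend t r, [])" using pq by (cases q; cases r) (auto simp: pcat_eq)
  qed
  then show ?thesis by (simp add: basis_elt_def)
qed

lemma basis_self_right:
  assumes r: "r \<in> BA" shows "alg_mult t BA x (basis_elt r) r = x (fst r, [])"
proof -
  have "alg_mult t BA x (basis_elt r) r = x (fst r, []) * basis_elt r r"
  proof (rule mult_single[OF r _ r])
    show "(fst r, []) \<in> BA" using BA_fst[OF r] triv_BA by blast
    show "pend t (fst r, []) = fst r" by simp
    show "pcat (fst r, []) r = r" by (simp add: pcat_eq)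
    fix p q assume pq: "p \<in> BA" "q \<in> BA" "pend t p = fst q" "pcat p q = r" "x p * basis_elt r q \<noteq> 0"
    then have "q = r" by (auto simp: basis_elt_def split: if_splits)
    then show "p = (fst r, []) \<and> q = r" using pq by (cases p; cases r) (auto simp: pcat_eq)
  qed
  then show ?thesis by (simp add: basis_elt_def)
qed


end

lemma mult_add_left: "alg_mult t BA (x + y) z = alg_mult t BA x z + alg_mult t BA y z"
  by (auto simp: alg_mult_def fun_eq_iff distrib_right sum.distrib split_def)

lemma mult_add_right: "alg_mult t BA z (x + y) = alg_mult t BA z x + alg_mult t BA z y"
  by (auto simp: alg_mult_def fun_eq_iff distrib_left sum.distrib split_def)

lemma mult_diff_left: "alg_mult t BA (x - y) z = alg_mult t BA x z - alg_mult t BA y z"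
  by (auto simp: alg_mult_def fun_eq_iff left_diff_distrib sum_subtractf split_def)

lemma mult_diff_right: "alg_mult t BA z (x - y) = alg_mult t BA z x - alg_mult t BA z y"
  by (auto simp: alg_mult_def fun_eq_iff right_diff_distrib sum_subtractf split_def)

lemma mult_smult_left: "alg_mult t BA (alg_smult c x) z = alg_smult c (alg_mult t BA x z)"
  by (auto simp: alg_mult_def alg_smult_def fun_eq_iff sum_distrib_left split_def mult.assoc)

lemma mult_smult_right: "alg_mult t BA z (alg_smult c x) = alg_smult c (alg_mult t BA z x)"
  by (auto simp: alg_mult_def alg_smult_def fun_eq_iff sum_distrib_left split_def mult.left_commute)

lemma mult_zero_left: "alg_mult t BA 0 z = 0"
  by (auto simp: alg_mult_def fun_eq_iff)

lemma mult_zero_right: "alg_mult t BA z 0 = 0"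
  by (auto simp: alg_mult_def fun_eq_iff)

interpretation VS: vector_space "alg_smult :: 'k::field \<Rightarrow> ('a qpath \<Rightarrow> 'k) \<Rightarrow> ('a qpath \<Rightarrow> 'k)"
  by unfold_locales (auto simp: alg_smult_def fun_eq_iff algebra_simps)

lemma sum_fun_apply: "(sum f A) x = (\<Sum>a\<in>A. f a x)"
  by (induction A rule: infinite_finite_induct) auto

definition Bset :: "nat \<Rightarrow> 'a qpath set \<Rightarrow> ('a qpath \<Rightarrow> 'k::field) set" where
  "Bset n BA = {y \<in> alg_carrier BA. y (1, []) = y (n, [])}"

lemma gen_sum: "finite F \<Longrightarrow> (\<forall>p\<in>F. g p \<in> gen_subalg m G) \<Longrightarrow> sum g F \<in> gen_subalg m G"
  by (induction F rule: finite_induct) (auto intro: gen_subalg.intros)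

lemma basis_elt_carrier: "p \<in> BA \<Longrightarrow> (basis_elt p :: 'a qpath \<Rightarrow> 'k::field) \<in> alg_carrier BA"
  by (auto simp: alg_carrier_def basis_elt_def)

lemma indep_union:
  fixes S T :: "('a qpath \<Rightarrow> 'k::field) set"
  assumes S: "VS.independent S" and T: "VS.independent T" and int: "VS.span S \<inter> VS.span T \<subseteq> {0}"
    and fT: "finite T"
  shows "VS.independent (S \<union> T)"
proof -
  have "F \<subseteq> T \<Longrightarrow> VS.independent (S \<union> F)" if "finite F" for F
    using that
  proof (induction F rule: finite_induct)
    case empty then show ?case using S by simp
  next
    case (insert v F)
    have IH: "VS.independent (S \<union> F)" using insert by blast
    have vT: "v \<in> T" using insert by blast
    show ?case
    proof (cases "v \<in> S")
      case True
      then have "S \<union> insert v F = S \<union> F" by blast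
      then show ?thesis using IH by simp
    next
      case False
      have "v \<notin> VS.span (S \<union> F)"
      proof
        assume "v \<in> VS.span (S \<union> F)"
        then obtain x y where xy: "v = x + y" "x \<in> VS.span S" "y \<in> VS.span F"
          unfolding VS.span_Un by blast
        have yT: "y \<in> VS.span T" using xy(3) VS.span_mono[of F T] insert by blast
        have "x = v - y" using xy by simp
        then have "x \<in> VS.span T" using VS.span_diff[OF VS.span_base[OF vT] yT] by simp
        then have "x = 0" using xy(2) int by blast
        then have "v \<in> VS.span F" using xy by simp
        moreover have "F \<subseteq> T - {v}" using insert by blast
        ultimately have "v \<in> VS.span (T - {v})" using VS.span_mono by blast
        then show False using T vT unfolding VS.dependent_def by blast
      qed
      then show ?thesis using IH False insert(2) VS.independent_insert[of v "S \<union> F"] by simp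
    qed
  qed
  then show ?thesis using fT by blast
qed

context monalg
begin

lemma n1: "n \<noteq> 1" using n2 by simp

lemma mult_triv:
  assumes i: "i \<in> {1..n}" shows "alg_mult t BA x y (i, []) = x (i, []) * y (i, [])"
proof (rule mult_single)
  show "(i, []) \<in> BA" using triv_BA[OF i] .
  then show "(i, []) \<in> BA" .
  show "(i, []) \<in> BA" by fact
  show "pend t (i, []) = fst (i, [])" by simp
  show "pcat (i, []) (i, []) = (i, [])" by simp
  fix p q :: "'a qpath"
  assume "pend t p = fst q" "pcat p q = (i, [])"
  then show "p = (i, []) \<and> q = (i, [])" by (cases p; cases q) auto
qed

lemma basis_prod:
  assumes p: "p \<in> BA" and q: "q \<in> BA" and e: "pend t p = fst q" and pq: "pcat p q \<in> BA"
  shows "alg_mult t BA (basis_elt p) (basis_elt q) = (basis_elt (pcat p q) :: 'a qpath \<Rightarrow> 'k::field)"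
proof
  fix w
  show "alg_mult t BA (basis_elt p) (basis_elt q) w = (basis_elt (pcat p q) :: 'a qpath \<Rightarrow> 'k) w"
  proof (cases "w = pcat p q")
    case True
    have "alg_mult t BA (basis_elt p) (basis_elt q) w = (basis_elt p p :: 'k) * basis_elt q q"
      by (rule mult_single[OF _ p q e]) (use True pq in \<open>auto simp: basis_elt_def split: if_splits\<close>)
    then show ?thesis using True by (simp add: basis_elt_def)
  next
    case False
    have "alg_mult t BA (basis_elt p) (basis_elt q) w = (0::'k)"
      by (rule mult_zero) (use False in \<open>auto simp: basis_elt_def\<close>)
    then show ?thesis using False by (simp add: basis_elt_def)
  qed
qed

abbreviation "GG \<equiv> glue_generators n Arr s"

lemma gen_Bset: "g \<in> (GG :: ('a qpath \<Rightarrow> 'k::field) set) \<Longrightarrow> g \<in> Bset n BA"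
  unfolding glue_generators_def Bset_def
  using triv_BA arrow_BA n1 n2 
  by (auto simp: alg_carrier_def basis_elt_def)

lemma B_sub: "x \<in> gen_subalg (alg_mult t BA) (GG :: ('a qpath \<Rightarrow> 'k::field) set) \<Longrightarrow> x \<in> Bset n BA"
proof (induction rule: gen_subalg.induct)
  case (gen g) then show ?case by (rule gen_Bset)
next
  case zero then show ?case by (simp add: Bset_def alg_carrier_def)
next
  case (add x y) then show ?case by (simp add: Bset_def alg_carrier_def)
next
  case (smult x c) then show ?case by (simp add: Bset_def alg_carrier_def alg_smult_def)
next
  case (mult x y) then show ?case
    using mult_triv[of 1 x y] mult_triv[of n x y] n2
    by (simp add: Bset_def alg_carrier_def mult_out)
qed

lemma path_in_B:
  "(i, xs) \<in> BA \<Longrightarrow> xs \<noteq> [] \<Longrightarrow> basis_elt (i, xs) \<in> gen_subalg (alg_mult t BA) (GG :: ('a qpath \<Rightarrow> 'k::field) set)"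
proof (induction xs arbitrary: i)
  case Nil then show ?case by simp
next
  case (Cons a xs)
  have a: "a \<in> Arr" "s a = i" using Cons.prems(1) by (auto simp: BA_iff)
  have ag: "basis_elt (s a, [a]) \<in> (GG :: ('a qpath \<Rightarrow> 'k::field) set)"
    using a unfolding glue_generators_def by blast
  show ?case
  proof (cases "xs = []")
    case True then show ?thesis using ag a by (auto intro: gen_subalg.gen)
  next
    case False
    have sp: "(i, [a]) \<in> BA \<and> (pend t (i, [a]), xs) \<in> BA"
      using BA_split[of i "[a]" xs] Cons.prems(1) by simp
    then have txs: "(t a, xs) \<in> BA" by (simp add: pend_def)
    have "(basis_elt (i, a # xs) :: 'a qpath \<Rightarrow> 'k) = alg_mult t BA (basis_elt (s a, [a])) (basis_elt (t a, xs))"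
      using basis_prod[of "(s a, [a])" "(t a, xs)", where 'k='k] arrow_BA[OF a(1)] txs Cons.prems(1) a
      by (simp add: pend_def)
    then show ?thesis
      using Cons.IH[OF txs False] ag by (auto intro: gen_subalg.intros)
  qed
qed

lemma Bset_sub: 
  assumes y: "y \<in> Bset n BA"
  shows "y \<in> gen_subalg (alg_mult t BA) (GG :: ('a qpath \<Rightarrow> 'k::field) set)"
proof -
  let ?f1 = "basis_elt (1, []) + basis_elt (n, []) :: 'a qpath \<Rightarrow> 'k"
  let ?F = "BA - {(1, []), (n, [])}"
  have yc: "\<And>r. r \<notin> BA \<Longrightarrow> y r = 0" and y1: "y (1, []) = y (n, [])"
    using y by (auto simp: Bset_def alg_carrier_def)
  have eq: "y = alg_smult (y (1, [])) ?f1 + (\<Sum>p\<in>?F. alg_smult (y p) (basis_elt p))"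
  proof
    fix r
    have "(\<Sum>p\<in>?F. alg_smult (y p) (basis_elt p)) r = (\<Sum>p\<in>?F. if p = r then y p else 0)"
      unfolding sum_fun_apply alg_smult_def basis_elt_def by (rule sum.cong) auto
    also have "\<dots> = (if r \<in> ?F then y r else 0)"
      using findim by (simp add: sum.delta')
    finally show "y r = (alg_smult (y (1, [])) ?f1 + (\<Sum>p\<in>?F. alg_smult (y p) (basis_elt p))) r"
      using yc[of r] y1 n1 by (auto simp: alg_smult_def basis_elt_def)
  qed
  have f1: "?f1 \<in> gen_subalg (alg_mult t BA) GG"
    by (rule gen_subalg.gen) (simp add: glue_generators_def)
  have "\<forall>p\<in>?F. alg_smult (y p) (basis_elt p) \<in> gen_subalg (alg_mult t BA) (GG :: ('a qpath \<Rightarrow> 'k::field) set)"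
  proof
    fix p assume p: "p \<in> ?F"
    obtain i xs where pi: "p = (i, xs)" by (cases p) blast
    have "basis_elt p \<in> gen_subalg (alg_mult t BA) (GG :: ('a qpath \<Rightarrow> 'k::field) set)"
    proof (cases "xs = []")
      case True
      have "i \<in> {1..n}" using BA_fst[of p] p pi by auto
      then have "2 \<le> i \<and> i \<le> n - 1" using p pi True by auto
      then show ?thesis using pi True by (intro gen_subalg.gen) (auto simp: glue_generators_def)
    next
      case False then show ?thesis using path_in_B[of i xs] p pi by auto
    qed
    then show "alg_smult (y p) (basis_elt p) \<in> gen_subalg (alg_mult t BA) GG"
      by (rule gen_subalg.smult)
  qed
  then have "(\<Sum>p\<in>?F. alg_smult (y p) (basis_elt p)) \<in> gen_subalg (alg_mult t BA) (GG :: ('a qpath \<Rightarrow> 'k::field) set)"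
    using findim by (intro gen_sum) auto
  then have "alg_smult (y (1, [])) ?f1 + (\<Sum>p\<in>?F. alg_smult (y p) (basis_elt p)) \<in> gen_subalg (alg_mult t BA) GG"
    by (rule gen_subalg.add[OF gen_subalg.smult[OF f1]])
  then show ?thesis by (subst eq)
qed

lemma B_eq: "gen_subalg (alg_mult t BA) (GG :: ('a qpath \<Rightarrow> 'k::field) set) = Bset n BA"
  using B_sub Bset_sub by blast


lemma center_subspace:
  assumes z: "(0::'a qpath \<Rightarrow> 'k::field) \<in> C" and a: "\<And>x y. x \<in> C \<Longrightarrow> y \<in> C \<Longrightarrow> x + y \<in> C"
    and sm: "\<And>c x. x \<in> C \<Longrightarrow> alg_smult c x \<in> C"
  shows "VS.subspace (alg_center C (alg_mult t BA))"
  unfolding VS.subspace_def alg_center_def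
  using z a sm
  by (auto simp: mult_add_left mult_add_right mult_smult_left mult_smult_right mult_zero_left mult_zero_right)

lemma carrier_closed:
  "(0::'a qpath \<Rightarrow> 'k::field) \<in> alg_carrier BA"
  "x \<in> alg_carrier BA \<Longrightarrow> y \<in> alg_carrier BA \<Longrightarrow> x + y \<in> alg_carrier BA"
  "x \<in> alg_carrier BA \<Longrightarrow> alg_smult c x \<in> alg_carrier BA"
  by (auto simp: alg_carrier_def alg_smult_def)

lemma Bset_closed:
  "(0::'a qpath \<Rightarrow> 'k::field) \<in> Bset n BA"
  "x \<in> Bset n BA \<Longrightarrow> y \<in> Bset n BA \<Longrightarrow> x + y \<in> Bset n BA"
  "x \<in> Bset n BA \<Longrightarrow> alg_smult c x \<in> Bset n BA"
  by (auto simp: Bset_def alg_carrier_def alg_smult_def)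

lemma ZA_endpoints:
  assumes x: "x \<in> alg_center (alg_carrier BA) (alg_mult t BA)" and r: "r \<in> BA"
  shows "(x::'a qpath \<Rightarrow> 'k::field) (fst r, []) = x (pend t r, [])"
proof -
  have "alg_mult t BA x (basis_elt r) = alg_mult t BA (basis_elt r) x"
    using x basis_elt_carrier[OF r] by (auto simp: alg_center_def)
  then have eq: "alg_mult t BA x (basis_elt r) r = alg_mult t BA (basis_elt r) x r" by simp
  have "x (fst r, []) = alg_mult t BA x (basis_elt r) r" by (rule basis_self_right[OF r, symmetric])
  also have "\<dots> = alg_mult t BA (basis_elt r) x r" by (rule eq)
  also have "\<dots> = x (pend t r, [])" by (rule basis_self_left[OF r])
  finally show ?thesis .
qed

lemma ZA_1n:
  assumes indec: "alg_indecomposable (alg_carrier BA :: ('a qpath \<Rightarrow> 'k::field) set) (alg_mult t BA) (alg_one n)"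
    and x: "x \<in> alg_center (alg_carrier BA) (alg_mult t BA)"
  shows "(x::'a qpath \<Rightarrow> 'k::field) (1, []) = x (n, [])"
proof -
  define e :: "'a qpath \<Rightarrow> 'k" where "e = (\<lambda>r. if snd r = [] \<and> fst r \<in> {1..n} \<and> x (fst r, []) = x (1, []) then 1 else 0)"
  have ed: "\<And>r. e r \<noteq> 0 \<Longrightarrow> snd r = []" by (auto simp: e_def split: if_splits)
  have eBA: "\<And>r. e r \<noteq> 0 \<Longrightarrow> r \<in> BA"
  proof -
    fix r assume "e r \<noteq> 0"
    then have "snd r = []" "fst r \<in> {1..n}" by (auto simp: e_def split: if_splits)
    then show "r \<in> BA" using triv_BA[of "fst r"] by (cases r) auto
  qed
  have ec: "e \<in> alg_carrier BA" using eBA by (auto simp: alg_carrier_def)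
  have ecent: "e \<in> alg_center (alg_carrier BA) (alg_mult t BA)"
    unfolding alg_center_def
  proof (intro CollectI conjI ballI ec)
    fix y :: "'a qpath \<Rightarrow> 'k" assume y: "y \<in> alg_carrier BA"
    show "alg_mult t BA e y = alg_mult t BA y e"
    proof
      fix w show "alg_mult t BA e y w = alg_mult t BA y e w"
      proof (cases "w \<in> BA")
        case False then show ?thesis by (simp add: mult_out)
      next
        case True
        have "e (fst w, []) = e (pend t w, [])"
          using ZA_endpoints[OF x True] BA_fst[OF True] BA_pend[OF True] by (simp add: e_def)
        then show ?thesis using diag_left[where d=e and y=y, OF ed True] diag_right[where d=e and y=y, OF ed True] by simp
      qed
    qed
  qed
  have eidem: "alg_mult t BA e e = e"
  proof
    fix w show "alg_mult t BA e e w = e w"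
    proof (cases "w \<in> BA")
      case False then show ?thesis using eBA[of w] by (auto simp: mult_out)
    next
      case True
      then show ?thesis using diag_left[where d=e and y=e, OF ed True] by (cases w) (auto simp: e_def)
    qed
  qed
  have e1: "e (1, []) = 1" using n2 by (simp add: e_def)
  then have "e \<noteq> 0" by auto
  then have "e = alg_one n" using indec ecent eidem by (auto simp: alg_indecomposable_def)
  then have "e (n, []) = 1" using n2 by (simp add: alg_one_def)
  then show ?thesis by (simp add: e_def split: if_splits)
qed

lemma triv_left:
  assumes w: "w \<in> BA"
  shows "alg_mult t BA (basis_elt (i, [])) (x :: 'a qpath \<Rightarrow> 'k::field) w = (if fst w = i then x w else 0)"
proof -
  have "alg_mult t BA (basis_elt (i, [])) x w = basis_elt (i, []) (fst w, [] :: 'a list) * x w"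
    by (rule diag_left[OF _ w]) (auto simp: basis_elt_def split: if_splits)
  then show ?thesis by (simp add: basis_elt_def)
qed

lemma triv_right:
  assumes w: "w \<in> BA"
  shows "alg_mult t BA (x :: 'a qpath \<Rightarrow> 'k::field) (basis_elt (i, [])) w = (if pend t w = i then x w else 0)"
proof -
  have "alg_mult t BA x (basis_elt (i, [])) w = x w * basis_elt (i, []) (pend t w, [] :: 'a list)"
    by (rule diag_right[OF _ w]) (auto simp: basis_elt_def split: if_splits)
  then show ?thesis by (simp add: basis_elt_def)
qed

lemma ZA_mixed:
  assumes x: "x \<in> alg_center (alg_carrier BA) (alg_mult t BA)" and w: "w \<in> BA"
    and mix: "(fst w = 1) \<noteq> (pend t w = 1)"
  shows "(x::'a qpath \<Rightarrow> 'k::field) w = 0"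
proof -
  have c: "basis_elt (1, []) \<in> alg_carrier BA" using triv_BA[of 1] n2 by (intro basis_elt_carrier) auto
  have "alg_mult t BA x (basis_elt (1, [])) = alg_mult t BA (basis_elt (1, [])) x"
    using x c by (auto simp: alg_center_def)
  then have "alg_mult t BA x (basis_elt (1, [])) w = alg_mult t BA (basis_elt (1, [])) x w" by simp
  then have "(if pend t w = 1 then x w else 0) = (if fst w = 1 then x w else 0)"
    using triv_left[OF w, of 1 x] triv_right[OF w, of x 1] by simp
  then show ?thesis using mix by (auto split: if_splits)
qed

lemma ZA_sub_ZB:
  assumes indec: "alg_indecomposable (alg_carrier BA :: ('a qpath \<Rightarrow> 'k::field) set) (alg_mult t BA) (alg_one n)"
  shows "alg_center (alg_carrier BA) (alg_mult t BA) \<subseteq> alg_center (Bset n BA) (alg_mult t BA :: ('a qpath \<Rightarrow> 'k::field) \<Rightarrow> _)"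
proof
  fix x :: "'a qpath \<Rightarrow> 'k" assume x: "x \<in> alg_center (alg_carrier BA) (alg_mult t BA)"
  then show "x \<in> alg_center (Bset n BA) (alg_mult t BA)"
    using ZA_1n[OF indec x] by (auto simp: alg_center_def Bset_def)
qed

abbreviation "NSP \<equiv> nonspecial_paths n Arr s t Z"

lemma NSP_BA: "p \<in> NSP \<Longrightarrow> p \<in> BA"
  by (simp add: nonspecial_paths_def)

lemma NSP_ends: "p \<in> NSP \<Longrightarrow> (fst p = 1 \<and> pend t p = n) \<or> (fst p = n \<and> pend t p = 1)"
  by (simp add: nonspecial_paths_def)

lemma NSP_mixed: "p \<in> NSP \<Longrightarrow> (fst p = 1) \<noteq> (pend t p = 1)"
  using NSP_ends n1 by fastforce

lemma finite_NSP: "finite NSP"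
  using findim by (rule finite_subset[rotated]) (auto simp: nonspecial_paths_def)

lemma nsp_comm:
  assumes u: "\<And>r. u r \<noteq> 0 \<Longrightarrow> r \<in> NSP" and y: "y \<in> Bset n BA"
  shows "alg_mult t BA u y = alg_mult t BA y (u :: 'a qpath \<Rightarrow> 'k::field)"
proof
  fix w show "alg_mult t BA u y w = alg_mult t BA y u w"
  proof (cases "w \<in> BA")
    case False then show ?thesis by (simp add: mult_out)
  next
    case True
    have l: "alg_mult t BA u y w = u w * y (pend t w, [])"
      by (rule ns_left[OF _ True]) (use u in \<open>auto simp: nonspecial_paths_def\<close>)
    have r: "alg_mult t BA y u w = y (fst w, []) * u w"
      by (rule ns_right[OF _ True]) (use u in \<open>auto simp: nonspecial_paths_def\<close>)
    have "u w = 0 \<or> y (pend t w, []) = y (fst w, [])"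
    proof (cases "u w = 0")
      case False
      then have "w \<in> NSP" using u by blast
      then have "(fst w = 1 \<and> pend t w = n) \<or> (fst w = n \<and> pend t w = 1)" by (rule NSP_ends)
      then show ?thesis using y by (auto simp: Bset_def)
    qed simp
    then show ?thesis using l r by auto
  qed
qed


lemma ZB_mixed:
  assumes x: "x \<in> alg_center (Bset n BA) (alg_mult t BA)" and w: "w \<in> BA" and nw: "w \<notin> NSP"
    and mix: "(fst w = 1) \<noteq> (pend t w = 1)"
  shows "(x :: 'a qpath \<Rightarrow> 'k::field) w = 0"
proof -
  have comm: "\<And>y. y \<in> Bset n BA \<Longrightarrow> alg_mult t BA x y = alg_mult t BA y x"
    using x by (auto simp: alg_center_def)
  have gB: "\<And>g. g \<in> (GG :: ('a qpath \<Rightarrow> 'k) set) \<Longrightarrow> g \<in> Bset n BA" by (rule gen_Bset)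
  show ?thesis
  proof (cases "fst w \<in> {1, n} \<and> pend t w \<in> {1, n}")
    case True
    then have ends: "(fst w = 1 \<and> pend t w = n) \<or> (fst w = n \<and> pend t w = 1)" using mix by auto
    have fp: "fst w \<noteq> pend t w" using ends n1 by auto
    then have ne: "snd w \<noteq> []" by (cases w) (auto simp: pend_def)
    have vw: "vp n Arr s t (fst w) (snd w)" using w by (simp add: BA_iff')
    from nw w ends have "(\<exists>a\<in>Arr. t a = fst w \<and> \<not> contains_rel Z (pcat (s a, [a]) w)) \<or>
        (\<exists>b\<in>Arr. pend t w = s b \<and> \<not> contains_rel Z (pcat w (s b, [b])))"
      by (auto simp: nonspecial_paths_def)
    then show ?thesis
    proof
      assume "\<exists>a\<in>Arr. t a = fst w \<and> \<not> contains_rel Z (pcat (s a, [a]) w)"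
      then obtain a where a: "a \<in> Arr" "t a = fst w" "\<not> contains_rel Z (pcat (s a, [a]) w)" by blast
      define W where "W = (s a, a # snd w)"
      have pW: "pcat (s a, [a]) w = W" by (simp add: W_def pcat_eq)
      have WBA: "W \<in> BA" using a vw arr_rng pW by (auto simp: W_def BA_iff)
      have ag: "basis_elt (s a, [a]) \<in> (GG :: ('a qpath \<Rightarrow> 'k) set)"
        using a(1) unfolding glue_generators_def by blast
      have l: "alg_mult t BA (basis_elt (s a, [a])) x W = x w"
      proof -
        have "alg_mult t BA (basis_elt (s a, [a])) x W = basis_elt (s a, [a]) (s a, [a]) * x w"
        proof (rule mult_single[OF WBA arrow_BA[OF a(1)] w])
          show "pend t (s a, [a]) = fst w" using a by (simp add: pend_def)
          show "pcat (s a, [a]) w = W" by (rule pW)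
          fix p q assume pq: "p \<in> BA" "q \<in> BA" "pend t p = fst q" "pcat p q = W"
            "basis_elt (s a, [a]) p * x q \<noteq> 0"
          then have pa: "p = (s a, [a])" by (auto simp: basis_elt_def split: if_splits)
          with pq a show "p = (s a, [a]) \<and> q = w"
            by (cases q; cases w) (auto simp: W_def pcat_eq pend_def)
        qed
        then show ?thesis by (simp add: basis_elt_def)
      qed
      have r: "alg_mult t BA x (basis_elt (s a, [a])) W = 0"
      proof (rule mult_zero)
        fix p q assume pq: "p \<in> BA" "q \<in> BA" "pend t p = fst q" "pcat p q = W"
        show "x p * basis_elt (s a, [a]) q = 0"
        proof (rule ccontr)
          assume "x p * basis_elt (s a, [a]) q \<noteq> 0"
          then have "q = (s a, [a])" by (auto simp: basis_elt_def split: if_splits)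
          then have "snd p @ [a] = a # snd w" using pq(4) by (auto simp: W_def pcat_eq)
          then have "last (a # snd w) = a" by (metis last_snoc)
          then have "last (snd w) = a" using ne by simp
          then have "pend t w = t a" using ne by (simp add: pend_def)
          then show False using a(2) fp by simp
        qed
      qed
      have "alg_mult t BA x (basis_elt (s a, [a])) = alg_mult t BA (basis_elt (s a, [a])) x"
        using comm gB[OF ag] by blast
      then have "alg_mult t BA x (basis_elt (s a, [a])) W = alg_mult t BA (basis_elt (s a, [a])) x W"
        by simp
      then show ?thesis using l r by simp
    next
      assume "\<exists>b\<in>Arr. pend t w = s b \<and> \<not> contains_rel Z (pcat w (s b, [b]))"
      then obtain b where b: "b \<in> Arr" "pend t w = s b" "\<not> contains_rel Z (pcat w (s b, [b]))" by blast
      define W where "W = (fst w, snd w @ [b])"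
      have pW: "pcat w (s b, [b]) = W" by (simp add: W_def pcat_eq)
      have pe: "pend t (fst w, snd w) = pend t w" by simp
      have WBA: "W \<in> BA" using b vw arr_rng pW pe by (auto simp: W_def BA_iff vp_append)
      have bg: "basis_elt (s b, [b]) \<in> (GG :: ('a qpath \<Rightarrow> 'k) set)"
        using b(1) unfolding glue_generators_def by blast
      have l: "alg_mult t BA x (basis_elt (s b, [b])) W = x w"
      proof -
        have "alg_mult t BA x (basis_elt (s b, [b])) W = x w * basis_elt (s b, [b]) (s b, [b])"
        proof (rule mult_single[OF WBA w arrow_BA[OF b(1)]])
          show "pend t w = fst (s b, [b])" using b by simp
          show "pcat w (s b, [b]) = W" by (rule pW)
          fix p q assume pq: "p \<in> BA" "q \<in> BA" "pend t p = fst q" "pcat p q = W"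
            "x p * basis_elt (s b, [b]) q \<noteq> 0"
          then have qb: "q = (s b, [b])" by (auto simp: basis_elt_def split: if_splits)
          with pq show "p = w \<and> q = (s b, [b])"
            by (cases p; cases w) (auto simp: W_def pcat_eq)
        qed
        then show ?thesis by (simp add: basis_elt_def)
      qed
      have r: "alg_mult t BA (basis_elt (s b, [b])) x W = 0"
      proof (rule mult_zero)
        fix p q assume pq: "p \<in> BA" "q \<in> BA" "pend t p = fst q" "pcat p q = W"
        show "basis_elt (s b, [b]) p * x q = 0"
        proof (rule ccontr)
          assume "basis_elt (s b, [b]) p * x q \<noteq> 0"
          then have "p = (s b, [b])" by (auto simp: basis_elt_def split: if_splits)
          then have "fst w = s b" using pq(4) by (auto simp: W_def pcat_eq)
          then show False using b(2) fp by simp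
        qed
      qed
      have "alg_mult t BA x (basis_elt (s b, [b])) = alg_mult t BA (basis_elt (s b, [b])) x"
        using comm gB[OF bg] by blast
      then have "alg_mult t BA x (basis_elt (s b, [b])) W = alg_mult t BA (basis_elt (s b, [b])) x W"
        by simp
      then show ?thesis using l r by simp
    qed
  next
    case False
    let ?f1 = "basis_elt (1, []) + basis_elt (n, []) :: 'a qpath \<Rightarrow> 'k"
    have fg: "?f1 \<in> GG" by (simp add: glue_generators_def)
    have "alg_mult t BA x ?f1 = alg_mult t BA ?f1 x" using comm gB[OF fg] by blast
    then have "alg_mult t BA x ?f1 w = alg_mult t BA ?f1 x w" by simp
    then have "(if pend t w = 1 then x w else 0) + (if pend t w = n then x w else 0) =
        (if fst w = 1 then x w else 0) + (if fst w = n then x w else 0)"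
      using triv_left[OF w, of 1 x] triv_right[OF w, of x 1] triv_left[OF w, of n x] triv_right[OF w, of x n]
      by (simp add: mult_add_left mult_add_right)
    then show ?thesis using False mix n1 by (auto split: if_splits)
  qed
qed

lemma ZA_subspace: "VS.subspace (alg_center (alg_carrier BA) (alg_mult t BA) :: ('a qpath \<Rightarrow> 'k::field) set)"
  by (rule center_subspace) (use carrier_closed in auto)

lemma ZB_subspace: "VS.subspace (alg_center (Bset n BA) (alg_mult t BA) :: ('a qpath \<Rightarrow> 'k::field) set)"
  by (rule center_subspace) (use Bset_closed in auto)

lemma E_sub_ZB: "(basis_elt ` NSP :: ('a qpath \<Rightarrow> 'k::field) set) \<subseteq> alg_center (Bset n BA) (alg_mult t BA)"
proof
  fix v :: "'a qpath \<Rightarrow> 'k" assume "v \<in> basis_elt ` NSP"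
  then obtain p where p: "p \<in> NSP" and v: "v = basis_elt p" by blast
  have pB: "p \<in> BA" using p by (rule NSP_BA)
  have "fst p \<noteq> pend t p" using NSP_ends[OF p] n1 by auto
  then have "p \<noteq> (1, [])" "p \<noteq> (n, [])" by (auto simp: pend_def)
  then have vB: "v \<in> Bset n BA" using basis_elt_carrier[OF pB] v by (auto simp: Bset_def basis_elt_def)
  have supp: "\<And>r. v r \<noteq> 0 \<Longrightarrow> r \<in> NSP" using p v by (auto simp: basis_elt_def split: if_splits)
  have "\<forall>y\<in>Bset n BA. alg_mult t BA v y = alg_mult t BA y v"
    using nsp_comm[OF supp] by blast
  then show "v \<in> alg_center (Bset n BA) (alg_mult t BA)" using vB by (simp add: alg_center_def)
qed

lemma spanE_vanish:
  assumes "x \<in> VS.span (basis_elt ` NSP :: ('a qpath \<Rightarrow> 'k::field) set)" "r \<notin> NSP"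
  shows "x r = 0"
proof -
  have "VS.span (basis_elt ` NSP :: ('a qpath \<Rightarrow> 'k::field) set) \<subseteq> {f. \<forall>r. r \<notin> NSP \<longrightarrow> f r = 0}"
  proof (rule VS.span_minimal)
    show "(basis_elt ` NSP :: ('a qpath \<Rightarrow> 'k::field) set) \<subseteq> {f. \<forall>r. r \<notin> NSP \<longrightarrow> f r = 0}"
      by (auto simp: basis_elt_def)
    show "VS.subspace {f :: 'a qpath \<Rightarrow> 'k. \<forall>r. r \<notin> NSP \<longrightarrow> f r = 0}"
      by (auto simp: VS.subspace_def alg_smult_def)
  qed
  then show ?thesis using assms by blast
qed

lemma ZB_decomp:
  assumes indec: "alg_indecomposable (alg_carrier BA :: ('a qpath \<Rightarrow> 'k::field) set) (alg_mult t BA) (alg_one n)"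
  shows "alg_center (Bset n BA) (alg_mult t BA) =
    {x + y | x y. x \<in> alg_center (alg_carrier BA) (alg_mult t BA) \<and> y \<in> VS.span (basis_elt ` NSP :: ('a qpath \<Rightarrow> 'k) set)}"
    (is "?ZB = ?S")
proof
  show "?S \<subseteq> ?ZB"
  proof
    fix z assume "z \<in> ?S"
    then obtain x y where z: "z = x + y" and x: "x \<in> alg_center (alg_carrier BA) (alg_mult t BA)"
      and y: "y \<in> VS.span (basis_elt ` NSP :: ('a qpath \<Rightarrow> 'k) set)" by blast
    have "x \<in> ?ZB" using ZA_sub_ZB[OF indec] x by blast
    moreover have "y \<in> ?ZB" using VS.span_minimal[OF E_sub_ZB ZB_subspace] y by blast
    ultimately show "z \<in> ?ZB" using z VS.subspace_add[OF ZB_subspace] by blast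
  qed
next
  show "?ZB \<subseteq> ?S"
  proof
    fix x :: "'a qpath \<Rightarrow> 'k" assume x: "x \<in> ?ZB"
    have xB: "x \<in> Bset n BA" and commB: "\<And>y. y \<in> Bset n BA \<Longrightarrow> alg_mult t BA x y = alg_mult t BA y x"
      using x by (auto simp: alg_center_def)
    define u where "u = (\<lambda>r. if r \<in> NSP then x r else 0)"
    have u_sum: "u = (\<Sum>p\<in>NSP. alg_smult (x p) (basis_elt p))"
    proof
      fix r
      have "(\<Sum>p\<in>NSP. alg_smult (x p) (basis_elt p)) r = (\<Sum>p\<in>NSP. if p = r then x r else 0)"
        unfolding sum_fun_apply alg_smult_def basis_elt_def by (rule sum.cong) auto
      also have "\<dots> = u r" using finite_NSP by (simp add: sum.delta' u_def)
      finally show "u r = (\<Sum>p\<in>NSP. alg_smult (x p) (basis_elt p)) r" by simp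
    qed
    have u_span: "u \<in> VS.span (basis_elt ` NSP)"
      unfolding u_sum
      by (intro VS.span_sum VS.span_scale VS.span_base) auto
    define x' where "x' = x - u"
    have xx: "x = x' + u" by (simp add: x'_def)
    have u_supp: "\<And>r. u r \<noteq> 0 \<Longrightarrow> r \<in> NSP" by (auto simp: u_def split: if_splits)
    have uc: "\<And>y. y \<in> Bset n BA \<Longrightarrow> alg_mult t BA u y = alg_mult t BA y u"
      by (rule nsp_comm[OF u_supp])
    have xc: "x \<in> alg_carrier BA" using xB by (simp add: Bset_def)
    have x'c: "x' \<in> alg_carrier BA"
      using xc NSP_BA by (auto simp: alg_carrier_def x'_def u_def)
    have mixed: "\<And>w. w \<in> BA \<Longrightarrow> (fst w = 1) \<noteq> (pend t w = 1) \<Longrightarrow> x' w = 0"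
    proof -
      fix w assume w: "w \<in> BA" and m: "(fst w = 1) \<noteq> (pend t w = 1)"
      show "x' w = 0"
      proof (cases "w \<in> NSP")
        case True then show ?thesis by (simp add: x'_def u_def)
      next
        case False then show ?thesis using ZB_mixed[OF x w False m] by (simp add: x'_def u_def)
      qed
    qed
    let ?e1 = "basis_elt (1, []) :: 'a qpath \<Rightarrow> 'k"
    have e1c: "?e1 \<in> alg_carrier BA" using triv_BA[of 1] n2 by (intro basis_elt_carrier) auto
    have ce1: "alg_mult t BA x' ?e1 = alg_mult t BA ?e1 x'"
    proof
      fix w show "alg_mult t BA x' ?e1 w = alg_mult t BA ?e1 x' w"
      proof (cases "w \<in> BA")
        case False then show ?thesis by (simp add: mult_out)
      next
        case True
        show ?thesis using triv_left[OF True, of 1 x'] triv_right[OF True, of x' 1] mixed[OF True] by auto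
      qed
    qed
    have "\<forall>y\<in>alg_carrier BA. alg_mult t BA x' y = alg_mult t BA y x'"
    proof
      fix y :: "'a qpath \<Rightarrow> 'k" assume y: "y \<in> alg_carrier BA"
      define c where "c = y (1, []) - y (n, [])"
      define y0 where "y0 = y - alg_smult c ?e1"
      have y0B: "y0 \<in> Bset n BA"
        using y e1c n1 by (auto simp: Bset_def alg_carrier_def y0_def c_def alg_smult_def basis_elt_def)
      have yy: "y = y0 + alg_smult c ?e1" by (simp add: y0_def)
      have c0: "alg_mult t BA x' y0 = alg_mult t BA y0 x'"
        unfolding x'_def mult_diff_left mult_diff_right using commB[OF y0B] uc[OF y0B] by simp
      show "alg_mult t BA x' y = alg_mult t BA y x'"
        unfolding yy mult_add_left mult_add_right mult_smult_left mult_smult_right c0 ce1 by simp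
    qed
    then have "x' \<in> alg_center (alg_carrier BA) (alg_mult t BA)" using x'c by (simp add: alg_center_def)
    then show "x \<in> ?S" using xx u_span by blast
  qed
qed

lemma basis_inj: "inj_on (basis_elt :: 'a qpath \<Rightarrow> 'a qpath \<Rightarrow> 'k::field) S"
proof
  fix p q assume "(basis_elt p :: 'a qpath \<Rightarrow> 'k) = basis_elt q"
  then have "(basis_elt p :: 'a qpath \<Rightarrow> 'k) p = basis_elt q p" by simp
  then show "p = q" by (auto simp: basis_elt_def split: if_splits)
qed

lemma carrier_span: "(alg_carrier BA :: ('a qpath \<Rightarrow> 'k::field) set) \<subseteq> VS.span (basis_elt ` BA)"
proof
  fix x :: "'a qpath \<Rightarrow> 'k" assume x: "x \<in> alg_carrier BA"
  have "x = (\<Sum>p\<in>BA. alg_smult (x p) (basis_elt p))"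
  proof
    fix r
    have "(\<Sum>p\<in>BA. alg_smult (x p) (basis_elt p)) r = (\<Sum>p\<in>BA. if p = r then x r else 0)"
      unfolding sum_fun_apply alg_smult_def basis_elt_def by (rule sum.cong) auto
    also have "\<dots> = x r"
    proof -
      have "r \<notin> BA \<Longrightarrow> x r = 0" using x unfolding alg_carrier_def by blast
      then show ?thesis using findim by (simp add: sum.delta')
    qed
    finally show "x r = (\<Sum>p\<in>BA. alg_smult (x p) (basis_elt p)) r" by simp
  qed
  also have "\<dots> \<in> VS.span (basis_elt ` BA)"
    by (intro VS.span_sum VS.span_scale VS.span_base) auto
  finally show "x \<in> VS.span (basis_elt ` BA)" .
qed

lemma dim_main:
  assumes indec: "alg_indecomposable (alg_carrier BA :: ('a qpath \<Rightarrow> 'k::field) set) (alg_mult t BA) (alg_one n)"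
  shows "VS.dim (alg_center (Bset n BA) (alg_mult t BA) :: ('a qpath \<Rightarrow> 'k) set) =
    VS.dim (alg_center (alg_carrier BA) (alg_mult t BA) :: ('a qpath \<Rightarrow> 'k) set) + card NSP"
proof -
  let ?E = "basis_elt ` NSP :: ('a qpath \<Rightarrow> 'k) set"
  let ?ZA = "alg_center (alg_carrier BA) (alg_mult t BA) :: ('a qpath \<Rightarrow> 'k) set"
  have int: "?ZA \<inter> VS.span ?E = {0}"
  proof
    show "?ZA \<inter> VS.span ?E \<subseteq> {0}"
    proof
      fix x assume x: "x \<in> ?ZA \<inter> VS.span ?E"
      have "x r = 0" for r
      proof (cases "r \<in> NSP")
        case True
        show ?thesis using ZA_mixed[of x r] x NSP_BA[OF True] NSP_mixed[OF True] by blast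
      next
        case False then show ?thesis using spanE_vanish[of x r] x by blast
      qed
      then show "x \<in> {0}" by auto
    qed
    show "{0} \<subseteq> ?ZA \<inter> VS.span ?E"
      using VS.subspace_0[OF ZA_subspace] VS.span_zero by auto
  qed
  have indep: "VS.independent ?E"
  proof (rule VS.independent_if_scalars_zero)
    show "finite ?E" using finite_NSP by blast
    fix c v assume h: "(\<Sum>v\<in>?E. alg_smult (c v) v) = 0" and v: "v \<in> ?E"
    then obtain p where p: "p \<in> NSP" and vp: "v = basis_elt p" by blast
    have "0 = (\<Sum>v\<in>?E. alg_smult (c v) v) p" using h by simp
    also have "\<dots> = (\<Sum>v\<in>?E. c v * v p)" by (simp add: sum_fun_apply alg_smult_def)
    also have "\<dots> = (\<Sum>q\<in>NSP. c (basis_elt q) * basis_elt q p)"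
      by (rule sum.reindex[OF basis_inj, unfolded comp_def])
    also have "\<dots> = (\<Sum>q\<in>NSP. if q = p then c (basis_elt p) else 0)"
      by (rule sum.cong) (auto simp: basis_elt_def)
    also have "\<dots> = c v" using finite_NSP p vp by (simp add: sum.delta')
    finally show "c v = 0" by simp
  qed
  have cE: "card ?E = card NSP" using card_image[OF basis_inj] by simp
  obtain BZ where BZ: "BZ \<subseteq> ?ZA" "VS.independent BZ" "?ZA \<subseteq> VS.span BZ" "card BZ = VS.dim ?ZA"
    by (rule VS.basis_exists)
  have spBZ: "VS.span BZ = ?ZA"
    using VS.span_minimal[OF BZ(1) ZA_subspace] BZ(3) by blast
  have "BZ \<subseteq> VS.span (basis_elt ` BA)"
    using BZ(1) carrier_span unfolding alg_center_def by blast
  then have finBZ: "finite BZ"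
    using VS.independent_span_bound[OF _ BZ(2)] findim by blast
  have iU: "VS.independent (BZ \<union> ?E)"
    by (rule indep_union[OF BZ(2) indep]) (use int spBZ finite_NSP in auto)
  have disj: "BZ \<inter> ?E = {}"
  proof (rule ccontr)
    assume "BZ \<inter> ?E \<noteq> {}"
    then obtain p where p: "p \<in> NSP" "basis_elt p \<in> BZ" by blast
    then have "basis_elt p \<in> ?ZA \<inter> VS.span ?E" using BZ(1) VS.span_base[of "basis_elt p" ?E] by blast
    then have "(basis_elt p :: 'a qpath \<Rightarrow> 'k) = 0" using int by blast
    then have "(basis_elt p :: 'a qpath \<Rightarrow> 'k) p = 0" by simp
    then show False by (simp add: basis_elt_def)
  qed
  have ZBeq: "alg_center (Bset n BA) (alg_mult t BA) = VS.span (BZ \<union> ?E)"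
    unfolding ZB_decomp[OF indec] VS.span_Un spBZ ..
  have "VS.dim (alg_center (Bset n BA) (alg_mult t BA) :: ('a qpath \<Rightarrow> 'k) set) = card (BZ \<union> ?E)"
    unfolding ZBeq by (rule VS.dim_unique[OF VS.span_superset order_refl iU refl])
  also have "\<dots> = card BZ + card ?E"
    by (rule card_Un_disjoint[OF finBZ _ disj]) (use finite_NSP in blast)
  finally show ?thesis using BZ(4) cE by simp
qed

end

theorem proposition6p3:
  fixes n :: nat and Arr :: "'a set" and s t :: "'a \<Rightarrow> nat" and Z :: "'a list set"
  defines "BA \<equiv> basis_paths n Arr s t Z"
  defines "A \<equiv> (alg_carrier BA :: ('a qpath \<Rightarrow> 'k::field) set)"
  defines "m \<equiv> (alg_mult t BA :: ('a qpath \<Rightarrow> 'k) \<Rightarrow> _ \<Rightarrow> _)"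
  defines "B \<equiv> gen_subalg m (glue_generators n Arr s)"
  assumes n2: "2 \<le> n"
    and arrows: "finite Arr" "\<forall>a\<in>Arr. s a \<in> {1..n} \<and> t a \<in> {1..n}"
    and rels: "monomial_relations n Arr s t Z"
    and findim: "finite BA"
    and indec: "alg_indecomposable A m (alg_one n)"
    and nonisol1: "\<exists>a\<in>Arr. s a = 1 \<or> t a = 1"
    and nonisoln: "\<exists>a\<in>Arr. s a = n \<or> t a = n"
  shows "(\<exists>\<phi>. (\<forall>x\<in>alg_center A m. \<phi> x \<in> alg_center B m) \<and> inj_on \<phi> (alg_center A m) \<and>
            (\<forall>x\<in>alg_center A m. \<forall>y\<in>alg_center A m. \<phi> (x + y) = \<phi> x + \<phi> y \<and> \<phi> (m x y) = m (\<phi> x) (\<phi> y)) \<and>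
            (\<forall>c. \<forall>x\<in>alg_center A m. \<phi> (alg_smult c x) = alg_smult c (\<phi> x)) \<and>
            \<phi> (alg_one n) = alg_one n)
       \<and> kdim (alg_center B m) = kdim (alg_center A m) + nsp n Arr s t Z"
proof -
  interpret monalg n Arr s t Z
    using n2 arrows rels findim unfolding BA_def by unfold_locales auto
  have Beq: "B = Bset n BA" unfolding B_def m_def BA_def by (rule B_eq)
  have ind: "alg_indecomposable (alg_carrier (basis_paths n Arr s t Z) :: ('a qpath \<Rightarrow> 'k) set)
      (alg_mult t (basis_paths n Arr s t Z)) (alg_one n)"
    using indec unfolding A_def m_def BA_def .
  have sub: "alg_center A m \<subseteq> alg_center B m"
    unfolding Beq A_def m_def BA_def using ZA_sub_ZB[OF ind] .
  have dim: "kdim (alg_center B m) = kdim (alg_center A m) + nsp n Arr s t Z"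
    unfolding kdim_def nsp_def Beq A_def m_def BA_def using dim_main[OF ind] .
  show ?thesis
    apply (rule conjI[OF _ dim])
    apply (rule exI[of _ "\<lambda>x. x"])
    using sub by auto
qed

end
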